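(* Let $\mathbf v=(v_1,\dots,v_m)$ and $\mathbf k=(k_1,\dots,k_m)$ be $m$-tuples of positive integers with $\mathbf v\ge\mathbf k$, and $\mathbf w=(w_1,\dots,w_n)$ and $\boldsymbol\ell=(\ell_1,\dots,\ell_n)$ be $n$-tuples of positive integers with $\mathbf w\ge\boldsymbol\ell$. Let $t$ be a positive integer with $t\le\sum_i k_i$ and $t\le\sum_i\ell_i$. Then \[ C(\mathrm{cat}(\mathbf v,\mathbf w),\mathrm{cat}(\mathbf k,\boldsymbol\ell),t)\ \le\ \max\{C(\mathbf v,\mathbf k,t),C(\mathbf w,\boldsymbol\ell,t)\}+C(\mathbf v,\mathbf k,t-1)\,C(\mathbf w,\boldsymbol\ell,t-1), \] with the convention $C(\cdot,\cdot,0)=0$.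
   Context: $\mathrm{cat}(\mathbf a,\mathbf b)$ denotes concatenation of tuples. For tuples $\mathbf a,\mathbf b$ of positive integers of the same length $p$ with $\mathbf b\le\mathbf a$ entrywise and a positive integer $s\le\sum_i b_i$: let $Y_1,\dots,Y_p$ be pairwise disjoint sets with $|Y_i|=a_i$; a block is a $p$-tuple $(B_1,\dots,B_p)$ with $B_i\subseteq Y_i$, $|B_i|=b_i$; a $p$-tuple of sets $(T_1,\dots,T_p)$ is $(\mathbf a,\mathbf b,s)$-admissible if $T_i\subseteq Y_i$, $|T_i|\le b_i$ for all $i$ and $\sum|T_i|=s$, and is contained in a block if $T_i\subseteq B_i$ for all $i$. A ${\rm GC}(\mathbf a,\mathbf b,s)$ is a finite family (repetitions allowed) of blocks containing every admissible tuple in at least one block; $C(\mathbf a,\mathbf b,s)$ is the minimum number of blocks of such a design. *)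

theory Defs
  imports Main
begin

text \<open>The ground sets are the concrete pairwise
disjoint sets Y_i = {i} x {0..<a_i} (any other choice of disjoint sets of the
same sizes gives the same value of C).\<close>

definition Yset :: "nat list \<Rightarrow> nat \<Rightarrow> (nat \<times> nat) set" where
  "Yset a i = {(i, j) | j. j < a ! i}"

definition is_block :: "nat list \<Rightarrow> nat list \<Rightarrow> (nat \<times> nat) set list \<Rightarrow> bool" where
  "is_block a b B \<longleftrightarrow> length B = length a \<and>
     (\<forall>i < length a. B ! i \<subseteq> Yset a i \<and> card (B ! i) = b ! i)"

definition admissible :: "nat list \<Rightarrow> nat list \<Rightarrow> nat \<Rightarrow> (nat \<times> nat) set list \<Rightarrow> bool" where
  "admissible a b s T \<longleftrightarrow> length T = length a \<and>
     (\<forall>i < length a. T ! i \<subseteq> Yset a i \<and> card (T ! i) \<le> b ! i) \<and>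
     (\<Sum>i<length a. card (T ! i)) = s"

definition contained_in :: "(nat \<times> nat) set list \<Rightarrow> (nat \<times> nat) set list \<Rightarrow> bool" where
  "contained_in T B \<longleftrightarrow> (\<forall>i < length T. T ! i \<subseteq> B ! i)"

text \<open>A GC(a,b,s), as a list of blocks (repetitions allowed).\<close>
definition is_GC :: "nat list \<Rightarrow> nat list \<Rightarrow> nat \<Rightarrow> (nat \<times> nat) set list list \<Rightarrow> bool" where
  "is_GC a b s F \<longleftrightarrow> (\<forall>B \<in> set F. is_block a b B) \<and>
     (\<forall>T. admissible a b s T \<longrightarrow> (\<exists>B \<in> set F. contained_in T B))"

definition Ccov :: "nat list \<Rightarrow> nat list \<Rightarrow> nat \<Rightarrow> nat" where
  "Ccov a b s = (if s = 0 then 0 else (LEAST n. \<exists>F. is_GC a b s F \<and> length F = n))"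

end

theory Submission
  imports Defs
begin

lemma card_Yset: "card (Yset a i) = a ! i" and finite_Yset: "finite (Yset a i)"
proof -
  have e: "Yset a i = Pair i ` {..<a!i}" unfolding Yset_def by auto
  show "card (Yset a i) = a ! i" unfolding e by (simp add: card_image inj_on_def)
  show "finite (Yset a i)" unfolding e by simp
qed

lemma num_interp: fixes p :: nat shows
  "(\<forall>i<p. x i \<le> (y i::nat)) \<Longrightarrow> sum x {..<p} \<le> s \<Longrightarrow> s \<le> sum y {..<p} \<Longrightarrow>
   \<exists>c. (\<forall>i<p. x i \<le> c i \<and> c i \<le> y i) \<and> sum c {..<p} = s"
proof (induction p arbitrary: s)
  case 0
  then show ?case by auto
next
  case (Suc p)
  define cp where "cp = max (x p) (s - sum y {..<p})"
  have xy: "sum x {..<p} \<le> sum y {..<p}" using Suc.prems(1) by (intro sum_mono) auto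
  have h1: "sum x {..<p} \<le> s - cp" and h2: "s - cp \<le> sum y {..<p}" and h3: "x p \<le> cp" "cp \<le> y p"
    and h4: "cp \<le> s"
    using Suc.prems xy by (auto simp: cp_def)
  obtain c where c: "\<forall>i<p. x i \<le> c i \<and> c i \<le> y i" "sum c {..<p} = s - cp"
    using Suc.IH[OF _ h1 h2] Suc.prems(1) by auto
  have "sum (c(p:=cp)) {..<p} = sum c {..<p}" by (rule sum.cong) auto
  then have "sum (c(p:=cp)) {..<Suc p} = s" using c(2) h4 by simp
  moreover have "\<forall>i<Suc p. x i \<le> (c(p:=cp)) i \<and> (c(p:=cp)) i \<le> y i"
    using c(1) h3 by (auto simp: less_Suc_eq)
  ultimately show ?case by blast
qed

lemma extend_adm:
  assumes ble: "\<forall>i<length a. b!i \<le> a!i"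
    and T: "length T = length a" "\<forall>i<length a. T!i \<subseteq> Yset a i \<and> card (T!i) \<le> b!i"
    and s1: "(\<Sum>i<length a. card (T!i)) \<le> s" and s2: "s \<le> (\<Sum>i<length a. b!i)"
  shows "\<exists>T'. admissible a b s T' \<and> contained_in T T'"
proof -
  obtain c where c: "\<forall>i<length a. card (T!i) \<le> c i \<and> c i \<le> b!i" "sum c {..<length a} = s"
    using num_interp[of "length a" "\<lambda>i. card (T!i)" "\<lambda>i. b!i" s] T s1 s2 by auto
  define P where "P i B \<longleftrightarrow> T!i \<subseteq> B \<and> B \<subseteq> Yset a i \<and> card B = c i" for i B
  have ex: "\<exists>B. P i B" if "i < length a" for i
  proof -
    have "card (T!i) \<le> c i" "c i \<le> card (Yset a i)" using c ble T that by (auto simp: card_Yset intro: le_trans)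
    then show ?thesis unfolding P_def using exists_subset_between[of "T!i" "c i" "Yset a i"] T that finite_Yset by auto
  qed
  define T' where "T' = map (\<lambda>i. SOME B. P i B) [0..<length a]"
  have P': "P i (T'!i)" if "i < length a" for i
    using someI_ex[OF ex[OF that]] that by (simp add: T'_def)
  have "admissible a b s T'"
    unfolding admissible_def
  proof (intro conjI allI impI)
    show "length T' = length a" by (simp add: T'_def)
    fix i assume "i < length a"
    then show "T'!i \<subseteq> Yset a i" "card (T'!i) \<le> b!i" using P' c by (auto simp: P_def)
  next
    have "(\<Sum>i<length a. card (T'!i)) = sum c {..<length a}" using P' by (intro sum.cong) (auto simp: P_def)
    then show "(\<Sum>i<length a. card (T'!i)) = s" using c by simp
  qed
  moreover have "contained_in T T'" unfolding contained_in_def using P' T by (auto simp: P_def)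
  ultimately show ?thesis by blast
qed

lemma adm_block:
  assumes "admissible a b s T" "s = (\<Sum>i<length a. b!i)"
  shows "is_block a b T"
proof -
  have le: "\<forall>i\<in>{..<length a}. card (T!i) \<le> b!i" using assms(1) by (auto simp: admissible_def)
  have "(\<Sum>i<length a. card (T!i)) = (\<Sum>i<length a. b!i)" using assms by (auto simp: admissible_def)
  then have eq: "card (T!i) = b!i" if "i < length a" for i
    by (rule sum_mono_inv) (use le that in auto)
  show ?thesis using assms(1) eq unfolding admissible_def is_block_def by blast
qed

lemma GC_exists:
  assumes ble: "\<forall>i<length a. b!i \<le> a!i"
  shows "\<exists>F. is_GC a b s F"
proof -
  let ?S = "{B. is_block a b B}"
  have "?S \<subseteq> {B. set B \<subseteq> Pow (\<Union>i<length a. Yset a i) \<and> length B = length a}"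
  proof (clarsimp)
    fix B assume B: "is_block a b B"
    show "set B \<subseteq> Pow (\<Union>i<length a. Yset a i) \<and> length B = length a"
    proof
      show "length B = length a" using B by (simp add: is_block_def)
      show "set B \<subseteq> Pow (\<Union>i<length a. Yset a i)"
      proof
        fix X assume "X \<in> set B"
        then obtain i where "i < length B" "X = B!i" by (auto simp: in_set_conv_nth)
        then show "X \<in> Pow (\<Union>i<length a. Yset a i)" using B unfolding is_block_def by auto
      qed
    qed
  qed
  moreover have "finite {B. set B \<subseteq> Pow (\<Union>i<length a. Yset a i) \<and> length B = length a}"
    by (intro finite_lists_length_eq) (auto intro: finite_Yset)
  ultimately have fin: "finite ?S" by (rule finite_subset)
  obtain F where F: "set F = ?S" using finite_list[OF fin] by blast
  have "is_GC a b s F" unfolding is_GC_def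
  proof (intro conjI allI impI ballI)
    fix B assume "B \<in> set F" then show "is_block a b B" using F by auto
  next
    fix T assume adm: "admissible a b s T"
    then obtain T' where T': "admissible a b (\<Sum>i<length a. b!i) T'" "contained_in T T'"
      using extend_adm[OF ble, of T "\<Sum>i<length a. b!i"] by (auto simp: admissible_def intro: sum_mono)
    then have "T' \<in> set F" using F adm_block by auto
    then show "\<exists>B\<in>set F. contained_in T B" using T' by blast
  qed
  then show ?thesis by blast
qed

lemma Ccov_le: "is_GC a b s F \<Longrightarrow> Ccov a b s \<le> length F"
proof -
  assume "is_GC a b s F"
  then have "(LEAST n. \<exists>F'. is_GC a b s F' \<and> length F' = n) \<le> length F"
    by (intro Least_le) blast
  then show ?thesis unfolding Ccov_def by simp
qed

lemma Ccov_obtain: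
  assumes "0 < s" "\<forall>i<length a. b!i \<le> a!i"
  obtains F where "is_GC a b s F" "length F = Ccov a b s"
proof -
  obtain F where "is_GC a b s F" using GC_exists[OF assms(2)] by blast
  then have "\<exists>n F. is_GC a b s F \<and> length F = n" by blast
  from LeastI_ex[OF this] obtain G where "is_GC a b s G" "length G = (LEAST n. \<exists>F. is_GC a b s F \<and> length F = n)" by blast
  then show ?thesis using that assms(1) unfolding Ccov_def by simp
qed

definition sh :: "nat \<Rightarrow> nat \<times> nat \<Rightarrow> nat \<times> nat" where
  "sh m p = (fst p + m, snd p)"

lemma inj_sh: "inj (sh m)"
  by (auto simp: inj_on_def sh_def prod_eq_iff)

lemma Yset_app1: "i < length v \<Longrightarrow> Yset (v@w) i = Yset v i"
  by (simp add: Yset_def nth_append)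

lemma Yset_app2: "j < length w \<Longrightarrow> Yset (v@w) (length v + j) = sh (length v) ` Yset w j"
  by (auto simp: Yset_def nth_append sh_def image_def)

lemma sum_split: "(\<Sum>i<m+n. f i) = (\<Sum>i<m. f i) + (\<Sum>j<n. f (m+j::nat))"
  by (induction n) (auto simp: add.assoc)

lemma block_cat:
  assumes "length v = length k" "is_block v k B" "is_block w l B'"
  shows "is_block (v@w) (k@l) (B @ map (image (sh (length v))) B')"
proof -
  have len: "length (B @ map (image (sh (length v))) B') = length (v @ w)"
    using assms by (simp add: is_block_def)
  have *: "(B @ map ((`) (sh (length v))) B') ! i \<subseteq> Yset (v @ w) i \<and>
         card ((B @ map ((`) (sh (length v))) B') ! i) = (k @ l) ! i" if i: "i < length (v@w)" for i
  proof (cases "i < length v")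
    case True
    then show ?thesis using assms by (simp add: is_block_def nth_append Yset_app1)
  next
    case False
    then obtain j where j: "i = length v + j" "j < length w" using i by (metis add_diff_inverse_nat length_append nat_add_left_cancel_less)
    have bl: "length B = length v" "length B' = length w" using assms by (auto simp: is_block_def)
    have "B'!j \<subseteq> Yset w j" "card (B'!j) = l!j" using assms(3) j by (auto simp: is_block_def)
    then show ?thesis using j bl assms(1) Yset_app2[OF j(2), of v]
      by (auto simp: nth_append card_image[OF inj_on_subset[OF inj_sh]])
  qed
  show ?thesis unfolding is_block_def using len * by blast
qed

lemma contained_cat:
  assumes "length T = length B + length B'"
    "\<forall>i<length B. T!i \<subseteq> B!i" "\<forall>j<length B'. T!(length B + j) \<subseteq> sh m ` (B'!j)"
  shows "contained_in T (B @ map (image (sh m)) B')"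
  unfolding contained_in_def
proof (intro allI impI)
  fix i assume i: "i < length T"
  show "T!i \<subseteq> (B @ map (image (sh m)) B')!i"
  proof (cases "i < length B")
    case True then show ?thesis using assms by (simp add: nth_append)
  next
    case False
    then obtain j where j: "i = length B + j" "j < length B'" using i assms(1)
      by (metis add_diff_inverse_nat nat_add_left_cancel_less)
    then show ?thesis using assms(3) by (simp add: nth_append)
  qed
qed

lemma contained_trans: "contained_in T T' \<Longrightarrow> contained_in T' B \<Longrightarrow> length T = length T' \<Longrightarrow> contained_in T B"
  unfolding contained_in_def by auto

lemma unsh_sh: "X \<subseteq> sh m ` Y \<Longrightarrow> sh m ` ((\<lambda>p. (fst p - m, snd p)) ` X) = X"
  by (force simp: sh_def image_def)

lemma unsh_sub: "X \<subseteq> sh m ` Y \<Longrightarrow> (\<lambda>p. (fst p - m, snd p)) ` X \<subseteq> Y"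
  by (force simp: sh_def image_def)

lemma minmem: "F \<noteq> [] \<Longrightarrow> F ! min j (length F - 1) \<in> set F"
  by (rule nth_mem) (cases F, auto simp: min_def)

lemma core:
  fixes v k w l :: "nat list" and t :: nat
  assumes lv: "length v = length k" and lw: "length w = length l"
    and blev: "\<forall>i<length v. k!i \<le> v!i" and blew: "\<forall>i<length w. l!i \<le> w!i"
    and tk: "t \<le> (\<Sum>i<length v. k!i)" and tl: "t \<le> (\<Sum>i<length w. l!i)"
    and F1: "is_GC v k t F1" "F1 \<noteq> []" and F2: "is_GC w l t F2" "F2 \<noteq> []"
    and G: "2 \<le> t \<Longrightarrow> is_GC v k (t-1) G1 \<and> is_GC w l (t-1) G2"
    and G1b: "\<forall>B\<in>set G1. is_block v k B" and G2b: "\<forall>B\<in>set G2. is_block w l B"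
  defines "m \<equiv> length v"
    and "P \<equiv> map (\<lambda>j. F1!(min j (length F1 - 1)) @ map (image (sh (length v))) (F2!(min j (length F2 - 1))))
               [0..<max (length F1) (length F2)]"
    and "Q \<equiv> map (\<lambda>(g1,g2). g1 @ map (image (sh (length v))) g2) (List.product G1 G2)"
  shows "is_GC (v@w) (k@l) t (P @ Q)"
  unfolding is_GC_def
proof (intro conjI allI impI ballI)
  fix B assume "B \<in> set (P @ Q)"
  then consider "B \<in> set P" | "B \<in> set Q" by auto
  then show "is_block (v @ w) (k @ l) B"
  proof cases
    case 1
    then obtain j where B: "B = F1!(min j (length F1 - 1)) @ map (image (sh m)) (F2!(min j (length F2 - 1)))"
      unfolding P_def m_def by auto
    have "F1!(min j (length F1 - 1)) \<in> set F1" "F2!(min j (length F2 - 1)) \<in> set F2"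
      using minmem[OF F1(2), of j] minmem[OF F2(2), of j] by simp_all
    then show ?thesis using B block_cat[OF lv] F1(1) F2(1) unfolding is_GC_def m_def by blast
  next
    case 2
    then obtain g1 g2 where B: "B = g1 @ map (image (sh m)) g2" "g1 \<in> set G1" "g2 \<in> set G2"
      unfolding Q_def m_def by auto
    then show ?thesis using block_cat[OF lv] G1b G2b unfolding m_def by blast
  qed
next
  fix T assume adm: "admissible (v @ w) (k @ l) t T"
  define n where "n = length w"
  have lT: "length T = m + n" using adm by (simp add: admissible_def m_def n_def)
  have lvk: "length (v@w) = m + n" by (simp add: m_def n_def)
  define T2 where "T2 = map (\<lambda>j. (\<lambda>p. (fst p - m, snd p)) ` (T!(m+j))) [0..<n]"
  have TY: "T!(m+j) \<subseteq> sh m ` Yset w j" if "j < n" for j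
  proof -
    have "m + j < length (v@w)" using that lvk by simp
    then have "T!(m+j) \<subseteq> Yset (v@w) (m+j)" using adm unfolding admissible_def by blast
    then show ?thesis using Yset_app2[of j w v] that by (simp add: m_def n_def)
  qed
  have eqT: "T!(m+j) = sh m ` (T2!j)" if "j < n" for j
    using unsh_sh[OF TY[OF that]] that by (simp add: T2_def)
  have T2Y: "T2!j \<subseteq> Yset w j" if "j < n" for j
    using unsh_sub[OF TY[OF that]] that by (simp add: T2_def)
  have cT2: "card (T!(m+j)) = card (T2!j)" if "j < n" for j
    using eqT[OF that] card_image[OF inj_on_subset[OF inj_sh[of m]], of "T2!j"] by simp
  have T2k: "card (T2!j) \<le> l!j" if "j < n" for j
  proof -
    have "card (T!(m+j)) \<le> (k@l)!(m+j)" using adm that unfolding admissible_def lvk by auto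
    then show ?thesis using cT2[OF that] by (simp add: nth_append m_def lv)
  qed
  have T1Y: "T!i \<subseteq> Yset v i" "card (T!i) \<le> k!i" if "i < m" for i
  proof -
    have "i < length (v@w)" using that lvk by simp
    then have "T!i \<subseteq> Yset (v@w) i" "card (T!i) \<le> (k@l)!i" using adm unfolding admissible_def by blast+
    then show "T!i \<subseteq> Yset v i" "card (T!i) \<le> k!i" using Yset_app1[of i v w] that
      by (simp_all add: m_def nth_append lv)
  qed
  define s1 where "s1 = (\<Sum>i<m. card (T!i))"
  define s2 where "s2 = (\<Sum>j<n. card (T2!j))"
  have "t = (\<Sum>i<m+n. card (T!i))" using adm unfolding admissible_def lvk by simp
  also have "\<dots> = s1 + (\<Sum>j<n. card (T!(m+j)))" unfolding s1_def by (rule sum_split)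
  also have "(\<Sum>j<n. card (T!(m+j))) = s2" unfolding s2_def using cT2 by (intro sum.cong) auto
  finally have ts: "t = s1 + s2" .
  define T1 where "T1 = take m T"
  have lT1: "length T1 = m" using lT by (simp add: T1_def)
  have T1n: "T1!i = T!i" if "i < m" for i using that by (simp add: T1_def)
  have lT2: "length T2 = n" by (simp add: T2_def)
  have fin2: "finite (T2!j)" if "j < n" for j using T2Y[OF that] finite_Yset finite_subset by blast
  have fin1: "finite (T!i)" if "i < m" for i using T1Y[OF that] finite_Yset finite_subset by blast
  show "\<exists>B\<in>set (P @ Q). contained_in T B"
  proof (cases "s2 = 0")
    case True
    then have "card (T2!j) = 0" if "j < n" for j using that unfolding s2_def by simp
    then have e: "T2!j = {}" if "j < n" for j using that fin2 by auto
    have "admissible v k t T1" unfolding admissible_def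
      using lT1 T1n T1Y ts True unfolding s1_def m_def by auto
    then obtain B where B: "B \<in> set F1" "contained_in T1 B" using F1(1) unfolding is_GC_def by blast
    then obtain j0 where j0: "j0 < length F1" "B = F1!j0" by (auto simp: in_set_conv_nth)
    define B' where "B' = F2!(min j0 (length F2 - 1))"
    have "B' \<in> set F2" using minmem[OF F2(2), of j0] by (simp add: B'_def)
    then have lB': "length B' = n" using F2(1) by (auto simp: is_GC_def is_block_def n_def)
    have lB: "length B = m" using B F1(1) by (auto simp: is_GC_def is_block_def m_def lv)
    have "B @ map (image (sh m)) B' \<in> set P"
      unfolding P_def m_def B'_def using j0 by (auto simp: image_iff intro!: bexI[of _ j0])
    moreover have "contained_in T (B @ map (image (sh m)) B')"
      by (rule contained_cat) (use lT lB lB' B(2) T1n e eqT in \<open>auto simp: contained_in_def lT1\<close>)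
    ultimately show ?thesis by auto
  next
    case s2: False
    show ?thesis
    proof (cases "s1 = 0")
      case True
      then have "card (T!i) = 0" if "i < m" for i using that unfolding s1_def by simp
      then have e: "T!i = {}" if "i < m" for i using that fin1 by auto
      have "admissible w l t T2" unfolding admissible_def
        using lT2 T2Y T2k ts True unfolding s2_def n_def by auto
      then obtain B' where B': "B' \<in> set F2" "contained_in T2 B'" using F2(1) unfolding is_GC_def by blast
      then obtain j0 where j0: "j0 < length F2" "B' = F2!j0" by (auto simp: in_set_conv_nth)
      define B where "B = F1!(min j0 (length F1 - 1))"
      have "B \<in> set F1" using minmem[OF F1(2), of j0] by (simp add: B_def)
      then have lB: "length B = m" using F1(1) by (auto simp: is_GC_def is_block_def m_def lv)
      have lB': "length B' = n" using B' F2(1) by (auto simp: is_GC_def is_block_def n_def)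
      have "B @ map (image (sh m)) B' \<in> set P"
        unfolding P_def m_def B_def using j0 by (auto simp: image_iff intro!: bexI[of _ j0])
      moreover have "contained_in T (B @ map (image (sh m)) B')"
        by (rule contained_cat) (use lT lB lB' B'(2) e eqT lT2 in \<open>auto simp: contained_in_def\<close>)
      ultimately show ?thesis by auto
    next
      case s1: False
      have t2: "2 \<le> t" using s1 s2 ts by linarith
      have "\<exists>T'. admissible v k (t-1) T' \<and> contained_in T1 T'"
        by (rule extend_adm) (use blev lT1 T1n T1Y tk s2 ts in \<open>auto simp: m_def lv s1_def\<close>)
      then obtain T1' where T1': "admissible v k (t-1) T1'" "contained_in T1 T1'" by blast
      have "\<exists>T'. admissible w l (t-1) T' \<and> contained_in T2 T'"
        by (rule extend_adm) (use blew lT2 T2Y T2k tl s1 ts in \<open>auto simp: n_def lw s2_def\<close>)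
      then obtain T2' where T2': "admissible w l (t-1) T2'" "contained_in T2 T2'" by blast
      obtain g1 where g1: "g1 \<in> set G1" "contained_in T1' g1" using G[OF t2] T1' unfolding is_GC_def by blast
      obtain g2 where g2: "g2 \<in> set G2" "contained_in T2' g2" using G[OF t2] T2' unfolding is_GC_def by blast
      have c1: "contained_in T1 g1" using contained_trans[OF T1'(2) g1(2)] T1' by (simp add: admissible_def lT1 m_def lv)
      have c2: "contained_in T2 g2" using contained_trans[OF T2'(2) g2(2)] T2' by (simp add: admissible_def lT2 n_def lw)
      have lB: "length g1 = m" using g1 G1b by (auto simp: is_block_def m_def lv)
      have lB': "length g2 = n" using g2 G2b by (auto simp: is_block_def n_def)
      have "g1 @ map (image (sh m)) g2 \<in> set Q"
        unfolding Q_def m_def using g1 g2 by (auto simp: image_iff intro!: bexI[of _ "(g1,g2)"])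
      moreover have "contained_in T (g1 @ map (image (sh m)) g2)"
      proof (rule contained_cat)
        show "length T = length g1 + length g2" using lT lB lB' by simp
        show "\<forall>i<length g1. T!i \<subseteq> g1!i" using c1 T1n lT1 lB by (auto simp: contained_in_def)
        show "\<forall>j<length g2. T!(length g1 + j) \<subseteq> sh m ` (g2!j)"
        proof (intro allI impI)
          fix j assume j: "j < length g2"
          have "T2!j \<subseteq> g2!j" using c2 j lT2 lB' by (auto simp: contained_in_def)
          then show "T!(length g1 + j) \<subseteq> sh m ` (g2!j)" using eqT[of j] j lB lB' by (simp add: image_mono)
        qed
      qed
      ultimately show ?thesis by auto
    qed
  qed
qed

lemma GC_nonempty:
  assumes ble: "\<forall>i<length a. b!i \<le> a!i" and "s \<le> (\<Sum>i<length a. b!i)" and "is_GC a b s F"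
  shows "F \<noteq> []"
proof -
  have "\<exists>T'. admissible a b s T' \<and> contained_in (replicate (length a) {}) T'"
    by (rule extend_adm[OF ble]) (use assms(2) in simp_all)
  then obtain T where "admissible a b s T" by blast
  then obtain B where "B \<in> set F" using assms(3) unfolding is_GC_def by blast
  then show ?thesis by auto
qed

theorem theorem6p3:
  fixes v k w l :: "nat list" and t :: nat
  assumes "length v = length k" and "length w = length l"
    and "\<forall>x \<in> set v. 0 < x" and "\<forall>x \<in> set k. 0 < x"
    and "\<forall>x \<in> set w. 0 < x" and "\<forall>x \<in> set l. 0 < x"
    and "list_all2 (\<lambda>x y. y \<le> x) v k" and "list_all2 (\<lambda>x y. y \<le> x) w l"
    and "0 < t" and "t \<le> sum_list k" and "t \<le> sum_list l"
  shows "Ccov (v @ w) (k @ l) t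
           \<le> max (Ccov v k t) (Ccov w l t) + Ccov v k (t - 1) * Ccov w l (t - 1)"
proof -
  have blev: "\<forall>i<length v. k!i \<le> v!i" using assms(7) by (auto dest: list_all2_nthD)
  have blew: "\<forall>i<length w. l!i \<le> w!i" using assms(8) by (auto dest: list_all2_nthD)
  have tk: "t \<le> (\<Sum>i<length v. k!i)" using assms(10) assms(1) by (simp add: sum_list_sum_nth atLeast0LessThan)
  have tl: "t \<le> (\<Sum>i<length w. l!i)" using assms(11) assms(2) by (simp add: sum_list_sum_nth atLeast0LessThan)
  obtain F1 where F1: "is_GC v k t F1" "length F1 = Ccov v k t" using Ccov_obtain[OF assms(9) blev] by blast
  obtain F2 where F2: "is_GC w l t F2" "length F2 = Ccov w l t" using Ccov_obtain[OF assms(9) blew] by blast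
  have n1: "F1 \<noteq> []" using GC_nonempty[OF blev tk F1(1)] .
  have n2: "F2 \<noteq> []" using GC_nonempty[OF blew tl F2(1)] .
  show ?thesis
  proof (cases "t = 1")
    case True
    have "is_GC (v@w) (k@l) t
      (map (\<lambda>j. F1!(min j (length F1 - 1)) @ map (image (sh (length v))) (F2!(min j (length F2 - 1))))
               [0..<max (length F1) (length F2)] @
       map (\<lambda>(g1,g2). g1 @ map (image (sh (length v))) g2) (List.product [] []))"
      by (rule core[OF assms(1,2) blev blew tk tl F1(1) n1 F2(1) n2]) (use True in simp_all)
    from Ccov_le[OF this] show ?thesis using F1(2) F2(2) True by (simp add: Ccov_def)
  next
    case False
    then have t2: "0 < t - 1" using assms(9) by simp
    obtain G1 where G1: "is_GC v k (t-1) G1" "length G1 = Ccov v k (t-1)" using Ccov_obtain[OF t2 blev] by blast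
    obtain G2 where G2: "is_GC w l (t-1) G2" "length G2 = Ccov w l (t-1)" using Ccov_obtain[OF t2 blew] by blast
    have "is_GC (v@w) (k@l) t
      (map (\<lambda>j. F1!(min j (length F1 - 1)) @ map (image (sh (length v))) (F2!(min j (length F2 - 1))))
               [0..<max (length F1) (length F2)] @
       map (\<lambda>(g1,g2). g1 @ map (image (sh (length v))) g2) (List.product G1 G2))"
      by (rule core[OF assms(1,2) blev blew tk tl F1(1) n1 F2(1) n2]) (use G1(1) G2(1) in \<open>simp_all add: is_GC_def\<close>)
    from Ccov_le[OF this] show ?thesis using F1(2) F2(2) G1(2) G2(2) by simp
  qed
qed

end
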